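(* Let $\Omega$ be a domain in $\mathbb{C}$ and let $L$ and $L'$ be two disjoint connected $\Omega$-convex compact sets. Then $L\cup L'$ is $\Omega$-convex if and only if one of the following holds: (1) $L\subset\mathbb{C}\setminus\widehat{L'}$ and $L'\subset\mathbb{C}\setminus\widehat{L}$; (2) there exists a hole $O$ of $L$ such that $L'\subset O$ and $O\setminus\widehat{L'}$ contains a hole of $\Omega$; (3) there exists a hole $O'$ of $L'$ such that $L\subset O'$ and $O'\setminus\widehat{L}$ contains a hole of $\Omega$.
   Context: A hole of a set $E\subset\mathbb{C}$ is a non-empty bounded connected component of $\mathbb{C}\setminus E$. For a compact set $K$, $\widehat{K}$ (its polynomial hull) is the union of $K$ and all its holes. For an open set $\Omega$, a compact set $K\subset\Omega$ is $\Omega$-convex if every hole of $K$ contains a point of $\mathbb{C}\setminus\Omega$. *)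

theory Defs
  imports "HOL-Analysis.Analysis"
begin

text \<open>A hole of E: a non-empty bounded connected component of the complement of E.
  (Elements of components are automatically non-empty.)\<close>
definition hole :: "complex set \<Rightarrow> complex set \<Rightarrow> bool" where
  "hole E U \<longleftrightarrow> U \<in> components (- E) \<and> bounded U"

text \<open>Polynomial hull: K together with all its holes.\<close>
definition phull :: "complex set \<Rightarrow> complex set" where
  "phull K = K \<union> \<Union>{U. hole K U}"

definition omega_convex :: "complex set \<Rightarrow> complex set \<Rightarrow> bool" where
  "omega_convex \<Omega> K \<longleftrightarrow> compact K \<and> K \<subseteq> \<Omega> \<and>
     (\<forall>U. hole K U \<longrightarrow> U \<inter> (- \<Omega>) \<noteq> {})"

end

theory Submission
  imports Defs
begin


lemma hole_iff: "hole K U \<longleftrightarrow> (\<exists>x. x \<notin> K \<and> U = connected_component_set (- K) x \<and> bounded U)"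
  unfolding hole_def components_iff by auto

lemma phull_eq: "phull K = K \<union> inside K"
proof -
  have "\<Union>{U. hole K U} = inside K"
  proof
    show "\<Union>{U. hole K U} \<subseteq> inside K"
    proof
      fix x assume "x \<in> \<Union>{U. hole K U}"
      then obtain U where U: "hole K U" "x \<in> U" by blast
      then obtain y where y: "y \<notin> K" "U = connected_component_set (- K) y" "bounded U"
        unfolding hole_iff by blast
      then have "connected_component_set (- K) x = U"
        using U(2) connected_component_eq by blast
      moreover have "x \<notin> K" using U(2) y connected_component_subset by blast
      ultimately show "x \<in> inside K" using y by (simp add: inside_def)
    qed
  next
    show "inside K \<subseteq> \<Union>{U. hole K U}"
    proof
      fix x assume x: "x \<in> inside K"
      then have "hole K (connected_component_set (- K) x)"
        unfolding hole_iff inside_def by blast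
      moreover have "x \<in> connected_component_set (- K) x" using x by (simp add: inside_def)
      ultimately show "x \<in> \<Union>{U. hole K U}" by blast
    qed
  qed
  then show ?thesis by (simp add: phull_def)
qed

lemma not_phull: "- phull K = outside K"
  by (simp add: phull_eq outside_inside)

lemma hole_sub_inside: "hole K U \<Longrightarrow> U \<subseteq> inside K"
proof
  fix x assume "hole K U" "x \<in> U"
  then obtain y where y: "y \<notin> K" "U = connected_component_set (- K) y" "bounded U"
    unfolding hole_iff by blast
  then have "connected_component_set (- K) x = U"
    using \<open>x \<in> U\<close> connected_component_eq by blast
  moreover have "x \<notin> K" using \<open>x \<in> U\<close> y connected_component_subset by blast
  ultimately show "x \<in> inside K" using y by (simp add: inside_def)
qed

lemma comp_eq:
  assumes "w \<notin> L" "w \<notin> L'" "connected_component_set (- L) w \<inter> L' = {}"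
  shows "connected_component_set (- (L \<union> L')) w = connected_component_set (- L) w"
proof
  show "connected_component_set (- (L \<union> L')) w \<subseteq> connected_component_set (- L) w"
    by (simp add: connected_component_mono)
  show "connected_component_set (- L) w \<subseteq> connected_component_set (- (L \<union> L')) w"
    using assms connected_component_subset[of "-L" w]
    by (intro connected_component_maximal) auto
qed


lemma hole_meets:
  assumes "omega_convex \<Omega> K" "w \<in> inside K"
  shows "connected_component_set (- K) w \<inter> - \<Omega> \<noteq> {}"
  using assms unfolding omega_convex_def hole_iff inside_def by blast

lemma caseA:
  fixes \<Omega> L L' :: "complex set"
  assumes "compact L" "compact L'" "L' \<subseteq> outside L" "L \<subseteq> outside L'"
    and cL: "omega_convex \<Omega> L" and cL': "omega_convex \<Omega> L'"
  shows "omega_convex \<Omega> (L \<union> L')"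
  unfolding omega_convex_def
proof (intro conjI allI impI)
  show "compact (L \<union> L')" using assms by (simp add: compact_Un)
  show "L \<union> L' \<subseteq> \<Omega>" using cL cL' by (simp add: omega_convex_def)
  fix W assume "hole (L \<union> L') W"
  then obtain w where w: "w \<notin> L \<union> L'" "W = connected_component_set (- (L \<union> L')) w" "bounded W"
    unfolding hole_iff by blast
  have bL: "bounded L" "bounded L'" using assms compact_imp_bounded by auto
  consider "w \<in> inside L" | "w \<in> inside L'" | "w \<in> outside L" "w \<in> outside L'"
    using w(1) by (metis Compl_iff Un_iff inside_Un_outside)
  then show "W \<inter> - \<Omega> \<noteq> {}"
  proof cases
    case 1
    have "connected_component_set (- L) w \<subseteq> inside L"
      using 1 inside_same_component by blast
    then have "connected_component_set (- L) w \<inter> L' = {}"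
      using assms(3) inside_Int_outside by blast
    then have "W = connected_component_set (- L) w"
      using comp_eq w by blast
    then show ?thesis using hole_meets[OF cL 1] by simp
  next
    case 2
    have "connected_component_set (- L') w \<subseteq> inside L'"
      using 2 inside_same_component by blast
    then have "connected_component_set (- L') w \<inter> L = {}"
      using assms(4) inside_Int_outside by blast
    then have "W = connected_component_set (- L') w"
      using comp_eq[of w L' L] w by (simp add: Un_commute)
    then show ?thesis using hole_meets[OF cL' 2] by simp
  next
    case 3
    have "outside L \<inter> outside L' \<subseteq> W"
    proof
      fix y assume y: "y \<in> outside L \<inter> outside L'"
      have "connected_component (- (L \<union> L')) w y"
      proof (rule Janiszewski)
        show "compact L" "closed L'" using assms compact_imp_closed by auto
        show "connected (L \<inter> L')" using assms(3) outside_no_overlap[of L'] assms(4)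
          by (metis connected_empty disjoint_iff_not_equal outside_no_overlap subsetD)
        show "connected_component (- L) w y"
          unfolding connected_component_def
          using 3 y connected_outside[OF bL(1)] outside_no_overlap[of L] by (intro exI[of _ "outside L"]) (auto simp: outside_def)
        show "connected_component (- L') w y"
          unfolding connected_component_def
          using 3 y connected_outside[OF bL(2)] outside_no_overlap[of L'] by (intro exI[of _ "outside L'"]) (auto simp: outside_def)
      qed
      then show "y \<in> W" using w by simp
    qed
    moreover have "\<not> bounded (outside L \<inter> outside L')"
    proof -
      have "bounded (- outside L)" "bounded (- outside L')" using bL cobounded_outside by auto
      then have "bounded (- (outside L \<inter> outside L'))" by simp
      then show ?thesis using cobounded_imp_unbounded by blast
    qed
    ultimately show ?thesis using w(3) bounded_subset by blast
  qed
qed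

lemma caseB:
  fixes \<Omega> L L' V :: "complex set"
  assumes "compact L" "compact L'" "connected L" "L \<inter> L' = {}"
    and cL: "omega_convex \<Omega> L" and cL': "omega_convex \<Omega> L'"
    and V: "hole L V" and "L' \<subseteq> V" and "L' \<noteq> {}"
  shows "L \<subseteq> outside L'" "L \<noteq> {}"
    "omega_convex \<Omega> (L \<union> L') \<longleftrightarrow> (\<exists>H. hole \<Omega> H \<and> H \<subseteq> V - phull L')"
proof -
  obtain p where p: "p \<notin> L" "V = connected_component_set (- L) p" "bounded V"
    using V unfolding hole_iff by blast
  have Vin: "V \<subseteq> inside L" using V hole_sub_inside by blast
  have bL: "bounded L" "bounded L'" using assms compact_imp_bounded by auto
  have clL: "closed L" "closed L'" using assms compact_imp_closed by auto
  show "L \<noteq> {}" using Vin assms by auto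
  show Lout: "L \<subseteq> outside L'"
  proof
    fix x assume x: "x \<in> L"
    have "L \<union> outside L \<subseteq> - L'"
      using Vin assms(4,8) inside_Int_outside[of L] by blast
    then have "L \<union> outside L \<subseteq> connected_component_set (- L') x"
      using x connected_with_outside[OF clL(1) assms(3)]
      by (intro connected_component_maximal) auto
    moreover have "\<not> bounded (L \<union> outside L)" using unbounded_outside[OF bL(1)] bounded_Un by blast
    ultimately have "\<not> bounded (connected_component_set (- L') x)" using bounded_subset by blast
    then show "x \<in> outside L'" by (simp add: outside)
  qed
  have openV: "open V" using p open_connected_component clL by (metis open_Compl)
  have Veq: "\<And>q. q \<in> V \<Longrightarrow> connected_component_set (- L) q = V"
    using p connected_component_eq by blast
  show "omega_convex \<Omega> (L \<union> L') \<longleftrightarrow> (\<exists>H. hole \<Omega> H \<and> H \<subseteq> V - phull L')"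
  proof
    assume cU: "omega_convex \<Omega> (L \<union> L')"
    have "outside L' \<inter> V \<noteq> {}"
      using outside_compact_in_open[OF assms(2) openV assms(8)] assms(8,9) by blast
    then obtain q where q: "q \<in> V" "q \<in> outside L'" by blast
    have qn: "q \<notin> L" "q \<notin> L'" using q Vin inside_no_overlap outside_no_overlap by blast+
    define W where "W = connected_component_set (- (L \<union> L')) q"
    have WV: "W \<subseteq> V" unfolding W_def using Veq[OF q(1)] connected_component_mono
      by (metis Compl_anti_mono sup_ge1)
    have "hole (L \<union> L') W" unfolding hole_iff W_def
      using qn WV p(3) bounded_subset W_def by blast
    then obtain r where r: "r \<in> W" "r \<notin> \<Omega>" using cU unfolding omega_convex_def by blast
    have Wout: "W \<subseteq> outside L'"
    proof
      fix y assume "y \<in> W"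
      then have "connected_component (- L') q y" unfolding W_def
        by (metis Compl_anti_mono connected_component_of_subset mem_Collect_eq sup_ge2)
      then show "y \<in> outside L'" using q(2) outside_same_component by blast
    qed
    define H where "H = connected_component_set (- \<Omega>) r"
    have LOm: "L \<subseteq> \<Omega>" "L' \<subseteq> \<Omega>" using cL cL' omega_convex_def by auto
    have "H \<subseteq> connected_component_set (- L) r" unfolding H_def
      using LOm by (intro connected_component_mono) auto
    also have "\<dots> = V" using Veq r WV by blast
    finally have HV: "H \<subseteq> V" .
    have "H \<subseteq> connected_component_set (- L') r" unfolding H_def
      using LOm by (intro connected_component_mono) auto
    also have "\<dots> \<subseteq> outside L'" using r Wout outside_same_component by blast
    finally have Hout: "H \<subseteq> outside L'" .
    have "hole \<Omega> H" unfolding hole_iff H_def using r HV p(3) bounded_subset H_def by blast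
    moreover have "H \<subseteq> V - phull L'" using HV Hout not_phull[of L'] by blast
    ultimately show "\<exists>H. hole \<Omega> H \<and> H \<subseteq> V - phull L'" by blast
  next
    assume "\<exists>H. hole \<Omega> H \<and> H \<subseteq> V - phull L'"
    then obtain H where H: "hole \<Omega> H" "H \<subseteq> V - phull L'" by blast
    have "H \<noteq> {}" using H(1) unfolding hole_def using in_components_nonempty by blast
    then obtain h where h: "h \<in> H" by blast
    have hV: "h \<in> V" "h \<in> outside L'" "h \<notin> \<Omega>" using H h not_phull[of L'] in_components_subset
      unfolding hole_def by blast+
    show "omega_convex \<Omega> (L \<union> L')"
      unfolding omega_convex_def
    proof (intro conjI allI impI)
      show "compact (L \<union> L')" using assms by (simp add: compact_Un)
      show "L \<union> L' \<subseteq> \<Omega>" using cL cL' by (simp add: omega_convex_def)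
      fix W assume "hole (L \<union> L') W"
      then obtain w where w: "w \<notin> L \<union> L'" "W = connected_component_set (- (L \<union> L')) w" "bounded W"
        unfolding hole_iff by blast
      consider "w \<notin> V" | "w \<in> V" "w \<in> inside L'" | "w \<in> V" "w \<in> outside L'"
        using w(1) by (metis Compl_iff Un_iff inside_Un_outside)
      then show "W \<inter> - \<Omega> \<noteq> {}"
      proof cases
        case 1
        have "connected_component_set (- L) w \<inter> V = {}"
          using 1 p connected_component_eq connected_component_disjoint
          by (metis connected_component_nonoverlap disjoint_iff)
        then have d: "connected_component_set (- L) w \<inter> L' = {}" using assms(8) by blast
        then have "W = connected_component_set (- L) w"
          using comp_eq w by blast
        moreover have "bounded (connected_component_set (- L) w)" using calculation w by simp
        then have "w \<in> inside L" using w by (simp add: inside_def)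
        ultimately show ?thesis using hole_meets[OF cL] by simp
      next
        case 2
        have "connected_component_set (- L') w \<subseteq> inside L'"
          using 2 inside_same_component by blast
        then have "connected_component_set (- L') w \<inter> L = {}"
          using Lout inside_Int_outside by blast
        then have "W = connected_component_set (- L') w"
          using comp_eq[of w L' L] w by (simp add: Un_commute)
        then show ?thesis using hole_meets[OF cL' 2(2)] by simp
      next
        case 3
        have cphull: "closed (phull L')"
          using not_phull[of L'] open_outside[OF clL(2)] by (metis double_complement open_closed)
        have "connected_component (- (L \<union> phull L')) w h"
        proof (rule Janiszewski)
          show "compact L" "closed (phull L')" using assms cphull by auto
          have "L \<inter> phull L' = {}" using Lout not_phull[of L'] by blast
          then show "connected (L \<inter> phull L')" by simp
          show "connected_component (- L) w h" using Veq[OF 3(1)] hV(1) by auto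
          show "connected_component (- phull L') w h"
            unfolding connected_component_def not_phull
            using 3 hV connected_outside[OF bL(2)] by (intro exI[of _ "outside L'"]) (auto simp: outside_def)
        qed
        then have "connected_component (- (L \<union> L')) w h"
          by (rule connected_component_of_subset) (auto simp: phull_def)
        then show ?thesis using w hV by auto
      qed
    qed
  qed
qed


lemma sideB:
  fixes \<Omega> L L' :: "complex set"
  assumes "compact L" "compact L'" "connected L" "connected L'" "L \<inter> L' = {}"
    and cL: "omega_convex \<Omega> L" and cL': "omega_convex \<Omega> L'"
    and nout: "\<not> L' \<subseteq> outside L"
  shows "omega_convex \<Omega> (L \<union> L') \<longleftrightarrow>
    ((L \<subseteq> - phull L' \<and> L' \<subseteq> - phull L)
     \<or> (\<exists>U. hole L U \<and> L' \<subseteq> U \<and> (\<exists>H. hole \<Omega> H \<and> H \<subseteq> U - phull L'))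
     \<or> (\<exists>U'. hole L' U' \<and> L \<subseteq> U' \<and> (\<exists>H. hole \<Omega> H \<and> H \<subseteq> U' - phull L)))"
proof -
  obtain x where x: "x \<in> L'" "x \<notin> outside L" using nout by blast
  have xL: "x \<notin> L" using x assms(5) by blast
  then have xin: "x \<in> inside L" using x by (metis Compl_iff Un_iff inside_Un_outside)
  define V where "V = connected_component_set (- L) x"
  have V: "hole L V" unfolding V_def hole_iff using xin xL by (auto simp: inside_def)
  have L'V: "L' \<subseteq> V" unfolding V_def using assms(4,5) x by (intro connected_component_maximal) auto
  have ne: "L' \<noteq> {}" using x by blast
  note B = caseB[OF assms(1,2,3,5) cL cL' V L'V ne]
  have n1: "\<not> (L' \<subseteq> - phull L)" using x not_phull[of L] by blast
  have n3: "\<not> (\<exists>U'. hole L' U' \<and> L \<subseteq> U' \<and> (\<exists>H. hole \<Omega> H \<and> H \<subseteq> U' - phull L))"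
  proof
    assume "\<exists>U'. hole L' U' \<and> L \<subseteq> U' \<and> (\<exists>H. hole \<Omega> H \<and> H \<subseteq> U' - phull L)"
    then obtain U' where "hole L' U'" "L \<subseteq> U'" by blast
    then have "L \<subseteq> inside L'" using hole_sub_inside by blast
    then show False using B(1,2) inside_Int_outside by blast
  qed
  have e2: "(\<exists>U. hole L U \<and> L' \<subseteq> U \<and> (\<exists>H. hole \<Omega> H \<and> H \<subseteq> U - phull L'))
     \<longleftrightarrow> (\<exists>H. hole \<Omega> H \<and> H \<subseteq> V - phull L')"
  proof
    assume "\<exists>U. hole L U \<and> L' \<subseteq> U \<and> (\<exists>H. hole \<Omega> H \<and> H \<subseteq> U - phull L')"
    then obtain U where U: "hole L U" "L' \<subseteq> U" "\<exists>H. hole \<Omega> H \<and> H \<subseteq> U - phull L'" by blast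
    have "U = V" using U(1,2) V L'V ne components_eq unfolding hole_def by blast
    then show "\<exists>H. hole \<Omega> H \<and> H \<subseteq> V - phull L'" using U(3) by simp
  next
    assume "\<exists>H. hole \<Omega> H \<and> H \<subseteq> V - phull L'"
    then show "\<exists>U. hole L U \<and> L' \<subseteq> U \<and> (\<exists>H. hole \<Omega> H \<and> H \<subseteq> U - phull L')"
      using V L'V by blast
  qed
  show ?thesis using B(3) n1 n3 e2 by blast
qed

theorem mainTheorem2:
  fixes \<Omega> L L' :: "complex set"
  assumes "open \<Omega>" and "connected \<Omega>" and "\<Omega> \<noteq> {}"
    and "compact L" and "compact L'" and "L \<subseteq> \<Omega>" and "L' \<subseteq> \<Omega>"
    and "connected L" and "connected L'" and "L \<inter> L' = {}"
    and "omega_convex \<Omega> L" and "omega_convex \<Omega> L'"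
  shows "omega_convex \<Omega> (L \<union> L') \<longleftrightarrow>
    ((L \<subseteq> - phull L' \<and> L' \<subseteq> - phull L)
     \<or> (\<exists>U. hole L U \<and> L' \<subseteq> U \<and> (\<exists>H. hole \<Omega> H \<and> H \<subseteq> U - phull L'))
     \<or> (\<exists>U'. hole L' U' \<and> L \<subseteq> U' \<and> (\<exists>H. hole \<Omega> H \<and> H \<subseteq> U' - phull L)))"
proof (cases "L' \<subseteq> outside L \<and> L \<subseteq> outside L'")
  case True
  then show ?thesis using caseA[OF assms(4,5) _ _ assms(11,12)] not_phull by blast
next
  case False
  then consider "\<not> L' \<subseteq> outside L" | "\<not> L \<subseteq> outside L'" by blast
  then show ?thesis
  proof cases
    case 1
    then show ?thesis using sideB[OF assms(4,5,8,9,10,11,12)] by blast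
  next
    case 2
    have d: "L' \<inter> L = {}" using assms(10) by blast
    show ?thesis using sideB[OF assms(5,4,9,8) d assms(12,11) 2]
      by (simp add: Un_commute) blast
  qed
qed

end
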